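(* Let $F\colon S^2\to S^2$ be a Thurston map of degree $d$ with $k=\#\operatorname{post}(F)\ge3$ postcritical points, and let $\mathcal{C}\supset\operatorname{post}(F)$ be an oriented Jordan curve. Let $\gamma^0=E_0,\dots,E_{k-1}$ be the $0$-edges, positively oriented and listed in their cyclic order along $\mathcal{C}$. Let $\gamma^1=E'_0,\dots,E'_{kd-1}$ be any Eulerian circuit in the graph of $1$-edges. Then $F\colon\gamma^1\to\gamma^0$ is a $d$-fold cover if and only if every $1$-edge is positively oriented in $\gamma^1$ (i.e. traversed by $\gamma^1$ in its positive orientation).
   Context: A Thurston map is an orientation-preserving, postcritically finite branched covering of $S^2$. The postcritical points divide $\mathcal{C}$ into $k$ closed arcs, the $0$-edges; a $0$-edge is positively oriented if its orientation agrees with that of $\mathcal{C}$. The $1$-vertices are the points of $F^{-1}(\operatorname{post}(F))$; a $1$-edge is the closure of a component of $F^{-1}(\mathcal{C})\setminus F^{-1}(\operatorname{post}(F))$; there are $kd$ of them and $F$ maps each $1$-edge homeomorphically onto a $0$-edge. An oriented $1$-edge $E$ is positively oriented if $F$ maps its initial/terminal point to the initial/terminal point of the positively oriented $0$-edge $F(E)$. An Eulerian circuit in the graph of $1$-edges is a cyclic sequence of oriented $1$-edges $E'_0,\dots,E'_{kd-1}$ (indices mod $kd$) in which each $1$-edge appears exactly once and the terminal point of $E'_j$ is the initial point of $E'_{j+1}$; the $1$-edge in $\gamma^1$ then carries the orientation given by this traversal. $F\colon\gamma^1\to\gamma^0$ is called a $d$-fold cover if $F$ maps succeeding $1$-edges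 of $\gamma^1$ to succeeding $0$-edges of $\gamma^0$; equivalently, if with $m$ the index such that $F(E'_0)=E_m$, one has $F(E'_j)=E_{m+j}$ (indices mod $k$) for all $j=0,\dots,kd-1$. *)

theory Defs
  imports Main
begin

text \<open>Post-critical points p 0, ..., p (k-1) in cyclic order along the oriented curve C;
  the positively oriented 0-edge E i runs from p i to p ((i+1) mod k).\<close>

definition post_set :: "(nat \<Rightarrow> 'p) \<Rightarrow> nat \<Rightarrow> 'p set" where
  "post_set p k = p ` {..<k}"

definition one_vertices :: "('p \<Rightarrow> 'p) \<Rightarrow> (nat \<Rightarrow> 'p) \<Rightarrow> nat \<Rightarrow> 'p set" where
  "one_vertices F p k = F -` post_set p k"

definition edge_structure ::
  "('p \<Rightarrow> 'p) \<Rightarrow> (nat \<Rightarrow> 'p) \<Rightarrow> (nat \<Rightarrow> 'p set) \<Rightarrow> nat \<Rightarrow> 'p set set \<Rightarrow> bool" where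
  "edge_structure F p E k E1 \<longleftrightarrow>
     inj_on p {..<k} \<and>
     (\<forall>i<k. E i \<inter> post_set p k = {p i, p (Suc i mod k)}) \<and>
     finite E1 \<and>
     (\<forall>e\<in>E1. inj_on F e \<and> (\<exists>i<k. F ` e = E i))"

text \<open>An oriented 1-edge (e, a, b): e with initial point a and terminal point b,
  where {a,b} are the two 1-vertices (endpoints) of e.\<close>
definition oriented_one_edge ::
  "('p \<Rightarrow> 'p) \<Rightarrow> (nat \<Rightarrow> 'p) \<Rightarrow> nat \<Rightarrow> 'p set \<times> 'p \<times> 'p \<Rightarrow> bool" where
  "oriented_one_edge F p k x \<longleftrightarrow>
     (case x of (e, a, b) \<Rightarrow> a \<noteq> b \<and> e \<inter> one_vertices F p k = {a, b})"

definition eulerian_circuit ::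
  "('p \<Rightarrow> 'p) \<Rightarrow> (nat \<Rightarrow> 'p) \<Rightarrow> nat \<Rightarrow> 'p set set \<Rightarrow> nat \<Rightarrow> (nat \<Rightarrow> 'p set \<times> 'p \<times> 'p) \<Rightarrow> bool" where
  "eulerian_circuit F p k E1 n c \<longleftrightarrow>
     bij_betw (\<lambda>j. fst (c j)) {..<n} E1 \<and>
     (\<forall>j<n. oriented_one_edge F p k (c j)) \<and>
     (\<forall>j<n. snd (snd (c j)) = fst (snd (c (Suc j mod n))))"

definition positively_oriented ::
  "('p \<Rightarrow> 'p) \<Rightarrow> (nat \<Rightarrow> 'p) \<Rightarrow> (nat \<Rightarrow> 'p set) \<Rightarrow> nat \<Rightarrow> 'p set \<times> 'p \<times> 'p \<Rightarrow> bool" where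
  "positively_oriented F p E k x \<longleftrightarrow>
     (case x of (e, a, b) \<Rightarrow>
        \<exists>i<k. F ` e = E i \<and> F a = p i \<and> F b = p (Suc i mod k))"

text \<open>F : gamma^1 -> gamma^0 is a d-fold cover: succeeding 1-edges are mapped to succeeding
  0-edges (cyclically; n = k d is the length of the circuit).\<close>
definition d_fold_cover ::
  "('p \<Rightarrow> 'p) \<Rightarrow> (nat \<Rightarrow> 'p set) \<Rightarrow> nat \<Rightarrow> nat \<Rightarrow> (nat \<Rightarrow> 'p set \<times> 'p \<times> 'p) \<Rightarrow> bool" where
  "d_fold_cover F E k n c \<longleftrightarrow>
     (\<forall>j<n. \<forall>i<k. F ` fst (c j) = E i \<longrightarrow> F ` fst (c (Suc j mod n)) = E (Suc i mod k))"

end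

theory Submission
  imports Defs
begin

lemma mod_facts:
  fixes k i :: nat
  assumes "3 \<le> k" "i < k"
  shows "i \<noteq> Suc i mod k" "i \<noteq> Suc (Suc i mod k) mod k" "Suc i mod k < k"
proof -
  show "Suc i mod k < k" using assms by simp
  show "i \<noteq> Suc i mod k"
  proof (cases "Suc i < k")
    case True then show ?thesis by simp
  next
    case False then have "Suc i = k" using assms by simp
    then show ?thesis using assms by simp
  qed
  show "i \<noteq> Suc (Suc i mod k) mod k"
  proof (cases "Suc i < k")
    case True
    then show ?thesis using assms
    proof (cases "Suc (Suc i) < k")
      case True then show ?thesis using \<open>Suc i < k\<close> by simp
    next
      case False then have "Suc (Suc i) = k" using \<open>Suc i < k\<close> by simp
      then show ?thesis using assms by simp
    qed
  next
    case False
    then have "Suc i = k" using assms by simp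
    then show ?thesis using assms by auto
  qed
qed

lemma idx_unique:
  assumes k: "3 \<le> k" and inj: "inj_on p {..<k}"
    and EP: "\<forall>i<k. E i \<inter> post_set p k = {p i, p (Suc i mod k)}"
    and i: "i < k" and i': "i' < k" and eq: "E i = E i'"
  shows "i = i'"
proof -
  have "{p i, p (Suc i mod k)} = {p i', p (Suc i' mod k)}"
    using EP i i' eq by metis
  moreover have s: "Suc i mod k < k" "Suc i' mod k < k" using i i' by auto
  moreover have "i \<noteq> Suc (Suc i mod k) mod k" using mod_facts[OF k i] by simp
  moreover have "i \<noteq> Suc i mod k" using mod_facts[OF k i] by simp
  ultimately show ?thesis
    using inj i i' unfolding inj_on_def doubleton_eq_iff by (metis lessThan_iff)
qed

lemma ends:
  assumes es: "edge_structure F p E k E1"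
    and e: "e \<in> E1" and or: "oriented_one_edge F p k (e, a, b)"
    and i: "i < k" and Fe: "F ` e = E i"
  shows "F a \<in> {p i, p (Suc i mod k)}" "F b \<in> {p i, p (Suc i mod k)}" "F a \<noteq> F b"
proof -
  have ab: "a \<noteq> b" "a \<in> e" "b \<in> e" "F a \<in> post_set p k" "F b \<in> post_set p k"
    using or unfolding oriented_one_edge_def one_vertices_def by auto
  have EP: "E i \<inter> post_set p k = {p i, p (Suc i mod k)}" using es i
    unfolding edge_structure_def by auto
  have "F a \<in> E i" "F b \<in> E i" using ab Fe by auto
  then show "F a \<in> {p i, p (Suc i mod k)}" "F b \<in> {p i, p (Suc i mod k)}"
    using EP ab by blast+
  have "inj_on F e" using es e unfolding edge_structure_def by auto
  then show "F a \<noteq> F b" using ab unfolding inj_on_def by blast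
qed

theorem lemma3p6:
  fixes F :: "'p \<Rightarrow> 'p" and p :: "nat \<Rightarrow> 'p" and E :: "nat \<Rightarrow> 'p set"
    and E1 :: "'p set set" and k d :: nat and c :: "nat \<Rightarrow> 'p set \<times> 'p \<times> 'p"
  assumes "3 \<le> k" and "2 \<le> d"
    and "edge_structure F p E k E1"
    and "card E1 = k * d"
    and "eulerian_circuit F p k E1 (k * d) c"
  shows "d_fold_cover F E k (k * d) c \<longleftrightarrow> (\<forall>j<k * d. positively_oriented F p E k (c j))"
proof -
  let ?n = "k * d"
  note k = assms(1) and es = assms(3)
  have inj: "inj_on p {..<k}" and EP: "\<forall>i<k. E i \<inter> post_set p k = {p i, p (Suc i mod k)}"
    using es unfolding edge_structure_def by auto
  have npos: "0 < ?n" using assms(1,2) by simp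
  have inE1: "\<And>j. j < ?n \<Longrightarrow> fst (c j) \<in> E1"
    using assms(5) unfolding eulerian_circuit_def bij_betw_def by auto
  have orj: "\<And>j. j < ?n \<Longrightarrow> oriented_one_edge F p k (c j)"
    using assms(5) unfolding eulerian_circuit_def by auto
  have link: "\<And>j. j < ?n \<Longrightarrow> snd (snd (c j)) = fst (snd (c (Suc j mod ?n)))"
    using assms(5) unfolding eulerian_circuit_def by auto
  have idx: "\<And>j. j < ?n \<Longrightarrow> \<exists>i<k. F ` fst (c j) = E i"
    using es inE1 unfolding edge_structure_def by auto
  have sj: "\<And>j. j < ?n \<Longrightarrow> Suc j mod ?n < ?n" using npos by simp
  have ends': "\<And>j i. j < ?n \<Longrightarrow> i < k \<Longrightarrow> F ` fst (c j) = E i \<Longrightarrow>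
      F (fst (snd (c j))) \<in> {p i, p (Suc i mod k)} \<and> F (snd (snd (c j))) \<in> {p i, p (Suc i mod k)}
      \<and> F (fst (snd (c j))) \<noteq> F (snd (snd (c j)))"
  proof -
    fix j i assume j: "j < ?n" and i: "i < k" and Fe: "F ` fst (c j) = E i"
    obtain e a b where cj: "c j = (e, a, b)" by (cases "c j") auto
    show "?thesis j i" using ends[OF es, of e a b i] inE1[OF j] orj[OF j] i Fe cj by simp
  qed
  show ?thesis
  proof
    assume cov: "d_fold_cover F E k ?n c"
    show "\<forall>j<?n. positively_oriented F p E k (c j)"
    proof (intro allI impI)
      fix j assume j: "j < ?n"
      obtain i where i: "i < k" "F ` fst (c j) = E i" using idx[OF j] by blast
      have i2: "F ` fst (c (Suc j mod ?n)) = E (Suc i mod k)"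
        using cov j i unfolding d_fold_cover_def by auto
      have si: "Suc i mod k < k" using i by simp
      have A: "F (snd (snd (c j))) \<in> {p i, p (Suc i mod k)}" using ends'[OF j i] by simp
      have B: "F (snd (snd (c j))) \<in> {p (Suc i mod k), p (Suc (Suc i mod k) mod k)}"
        using ends'[OF sj[OF j] si i2] link[OF j] by simp
      have ne: "p i \<noteq> p (Suc (Suc i mod k) mod k)"
        using mod_facts[OF k i(1)] inj i(1) unfolding inj_on_def
        by (metis lessThan_iff mod_less_divisor neq0_conv not_less0 i(1) less_nat_zero_code)
      have Fb: "F (snd (snd (c j))) = p (Suc i mod k)" using A B ne by auto
      have Fa: "F (fst (snd (c j))) = p i" using ends'[OF j i] Fb by auto
      show "positively_oriented F p E k (c j)"
        unfolding positively_oriented_def using Fa Fb i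
        by (cases "c j") auto
    qed
  next
    assume pos: "\<forall>j<?n. positively_oriented F p E k (c j)"
    have P: "\<And>j. j < ?n \<Longrightarrow> \<exists>i<k. F ` fst (c j) = E i \<and> F (fst (snd (c j))) = p i
         \<and> F (snd (snd (c j))) = p (Suc i mod k)"
    proof -
      fix j assume j: "j < ?n"
      have "positively_oriented F p E k (c j)" using pos j by blast
      then show "?thesis j" unfolding positively_oriented_def by (cases "c j") auto
    qed
    show "d_fold_cover F E k ?n c"
      unfolding d_fold_cover_def
    proof (intro allI impI)
      fix j i assume j: "j < ?n" and i: "i < k" and Fe: "F ` fst (c j) = E i"
      obtain i0 where i0: "i0 < k" "F ` fst (c j) = E i0" "F (snd (snd (c j))) = p (Suc i0 mod k)"
        using P[OF j] by blast
      have "i0 = i" using idx_unique[OF k inj EP i0(1) i] i0 Fe by simp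
      obtain i1 where i1: "i1 < k" "F ` fst (c (Suc j mod ?n)) = E i1"
          "F (fst (snd (c (Suc j mod ?n)))) = p i1"
        using P[OF sj[OF j]] by blast
      have "p i1 = p (Suc i mod k)" using i1 i0 link[OF j] \<open>i0 = i\<close> by simp
      then have "i1 = Suc i mod k" using inj i1(1) i unfolding inj_on_def by simp
      then show "F ` fst (c (Suc j mod ?n)) = E (Suc i mod k)" using i1 by simp
    qed
  qed
qed

end
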